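(* Let $G=(V,E)$ be a finite simple graph, let $A$ be a nonzero commutative ring with unity, let $R=A[V]$, and let $S\subseteq V$. Then $$\mathcal{N}_S(G)=\bigcap_{D}(D)R=\bigcap_{D\ \mathrm{minimal}}(D)R,$$ where the first intersection is over all $S$-TD-sets $D$ of $G$ and the second over all minimal $S$-TD-sets of $G$. Moreover, the second decomposition is irredundant.
   Context: For $v\in V$, $N(v)=\{u\in V: uv\in E\}$, and for $D\subseteq V$, $N(D)=\bigcup_{v\in D}N(v)$. For $U\subseteq V$, $X_U=\prod_{v\in U}v\in A[V]$. The $S$-open neighborhood ideal is $\mathcal{N}_S(G)=(X_{N(v)}\mid v\in S)R$. A set $D\subseteq V$ is an $S$-TD-set of $G$ if $N(D)\supseteq S$; it is minimal if no proper subset of $D$ is an $S$-TD-set. $(D)R$ is the ideal generated by the variables in $D$. *)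

theory Defs
  imports "HOL-Library.Poly_Mapping"
begin

text \<open>Polynomial ring A[V]: finitely supported maps from monomials (exponent vectors
  of type v to nat) to coefficients in A.\<close>
type_synonym ('v, 'a) mpol = "('v \<Rightarrow>\<^sub>0 nat) \<Rightarrow>\<^sub>0 'a"

definition var :: "'v \<Rightarrow> ('v, 'a::comm_ring_1) mpol" where
  "var v = Poly_Mapping.single (Poly_Mapping.single v 1) 1"

definition monom_X :: "'v set \<Rightarrow> ('v, 'a::comm_ring_1) mpol" where
  "monom_X U = (\<Prod>v\<in>U. var v)"

definition is_ideal :: "'r::comm_ring_1 set \<Rightarrow> bool" where
  "is_ideal I \<longleftrightarrow> 0 \<in> I \<and> (\<forall>x\<in>I. \<forall>y\<in>I. x + y \<in> I) \<and> (\<forall>r. \<forall>x\<in>I. r * x \<in> I)"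

definition gen_ideal :: "'r::comm_ring_1 set \<Rightarrow> 'r set" where
  "gen_ideal X = \<Inter> {I. X \<subseteq> I \<and> is_ideal I}"

definition nbhd :: "('v \<Rightarrow> 'v \<Rightarrow> bool) \<Rightarrow> 'v \<Rightarrow> 'v set" where
  "nbhd E v = {u. E u v}"

definition nbhd_set :: "('v \<Rightarrow> 'v \<Rightarrow> bool) \<Rightarrow> 'v set \<Rightarrow> 'v set" where
  "nbhd_set E D = (\<Union>v\<in>D. nbhd E v)"

definition open_nbhd_ideal :: "('v \<Rightarrow> 'v \<Rightarrow> bool) \<Rightarrow> 'v set \<Rightarrow> ('v, 'a::comm_ring_1) mpol set" where
  "open_nbhd_ideal E S = gen_ideal ((\<lambda>v. monom_X (nbhd E v)) ` S)"

definition is_STD :: "('v \<Rightarrow> 'v \<Rightarrow> bool) \<Rightarrow> 'v set \<Rightarrow> 'v set \<Rightarrow> bool" where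
  "is_STD E S D \<longleftrightarrow> S \<subseteq> nbhd_set E D"

definition is_min_STD :: "('v \<Rightarrow> 'v \<Rightarrow> bool) \<Rightarrow> 'v set \<Rightarrow> 'v set \<Rightarrow> bool" where
  "is_min_STD E S D \<longleftrightarrow> is_STD E S D \<and> (\<forall>D'. D' \<subset> D \<longrightarrow> \<not> is_STD E S D')"

definition var_ideal :: "'v set \<Rightarrow> ('v, 'a::comm_ring_1) mpol set" where
  "var_ideal D = gen_ideal (var ` D)"

end

theory Submission imports Defs begin

lemma gen_ideal_is_ideal: "is_ideal (gen_ideal X)"
  unfolding gen_ideal_def is_ideal_def by blast

lemma gen_ideal_sub: "X \<subseteq> gen_ideal X"
  unfolding gen_ideal_def by blast

lemma gen_ideal_least: "X \<subseteq> I \<Longrightarrow> is_ideal I \<Longrightarrow> gen_ideal X \<subseteq> I"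
  unfolding gen_ideal_def by blast

lemma ideal_sum: "is_ideal I \<Longrightarrow> (\<And>x. x \<in> A \<Longrightarrow> f x \<in> I) \<Longrightarrow> sum f A \<in> I"
  by (induction A rule: infinite_finite_induct) (auto simp: is_ideal_def)

lemma ideal_mult: "is_ideal I \<Longrightarrow> x \<in> I \<Longrightarrow> r * x \<in> I"
  unfolding is_ideal_def by blast

definition keyideal :: "('k::comm_monoid_add) set \<Rightarrow> ('k \<Rightarrow>\<^sub>0 'a::comm_ring_1) set" where
  "keyideal P = {f. Poly_Mapping.keys f \<subseteq> P}"

lemma keyideal_is_ideal:
  assumes up: "\<And>a b. b \<in> P \<Longrightarrow> a + b \<in> P"
  shows "is_ideal (keyideal P :: ('k::comm_monoid_add \<Rightarrow>\<^sub>0 'a::comm_ring_1) set)"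
  unfolding is_ideal_def keyideal_def
proof (intro conjI ballI allI)
  show "(0 :: 'k \<Rightarrow>\<^sub>0 'a) \<in> {f. Poly_Mapping.keys f \<subseteq> P}" by simp
  fix x y :: "'k \<Rightarrow>\<^sub>0 'a" assume "x \<in> {f. Poly_Mapping.keys f \<subseteq> P}" "y \<in> {f. Poly_Mapping.keys f \<subseteq> P}"
  then show "x + y \<in> {f. Poly_Mapping.keys f \<subseteq> P}" using keys_add[of x y] by auto
next
  fix r x :: "'k \<Rightarrow>\<^sub>0 'a" assume "x \<in> {f. Poly_Mapping.keys f \<subseteq> P}"
  then have kx: "Poly_Mapping.keys x \<subseteq> P" by simp
  show "r * x \<in> {f. Poly_Mapping.keys f \<subseteq> P}"
  proof (simp, rule subsetI)
    fix z assume "z \<in> Poly_Mapping.keys (r * x)"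
    then obtain a b where "z = a + b" "b \<in> Poly_Mapping.keys x" using keys_mult[of r x] by blast
    then show "z \<in> P" using kx up by blast
  qed
qed

lemma sum_monos: "p = (\<Sum>k\<in>Poly_Mapping.keys p. Poly_Mapping.single k (Poly_Mapping.lookup p k))"
  by (rule poly_mapping_eqI) (simp add: lookup_sum lookup_single when_def in_keys_iff)

definition ev :: "'v set \<Rightarrow> 'v \<Rightarrow>\<^sub>0 nat" where
  "ev U = (\<Sum>u\<in>U. Poly_Mapping.single u 1)"

lemma lookup_ev: "finite U \<Longrightarrow> Poly_Mapping.lookup (ev U) d = (if d \<in> U then 1 else 0)"
  by (simp add: ev_def lookup_sum lookup_single when_def)

lemma monom_X_single: "finite U \<Longrightarrow> (monom_X U :: ('v,'a::comm_ring_1) mpol) = Poly_Mapping.single (ev U) 1"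
proof (induction U rule: finite_induct)
  case empty
  then show ?case by (simp add: monom_X_def ev_def one_poly_mapping.abs_eq single.abs_eq)
next
  case (insert x F)
  then show ?case by (simp add: monom_X_def ev_def var_def mult_single)
qed

lemma monom_X_in_var_ideal:
  assumes "finite U" "d \<in> U" "d \<in> D"
  shows "monom_X U \<in> var_ideal D"
proof -
  have eq0: "monom_X U = var d * monom_X (U - {d})"
    using assms by (simp add: monom_X_def prod.remove)
  have eq: "monom_X U = monom_X (U - {d}) * var d"
    unfolding eq0 by (rule mult.commute)
  have vd: "var d \<in> gen_ideal (var ` D)"
    by (rule gen_ideal_sub[THEN subsetD]) (use assms in blast)
  show ?thesis
    unfolding eq var_ideal_def by (rule ideal_mult[OF gen_ideal_is_ideal vd])
qed

lemma var_ideal_keys: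
  fixes D :: "'v set" and f :: "('v, 'a::comm_ring_1) mpol"
  assumes "f \<in> var_ideal D" "m \<in> Poly_Mapping.keys f"
  shows "\<exists>d\<in>D. 0 < Poly_Mapping.lookup m d"
proof -
  let ?P = "{m :: 'v \<Rightarrow>\<^sub>0 nat. \<exists>d\<in>D. 0 < Poly_Mapping.lookup m d}"
  have "var_ideal D \<subseteq> keyideal ?P"
    unfolding var_ideal_def
  proof (rule gen_ideal_least)
    show "var ` D \<subseteq> keyideal ?P"
    proof (clarsimp simp: keyideal_def var_def)
      fix d assume "d \<in> D"
      then show "\<exists>d'\<in>D. 0 < Poly_Mapping.lookup (Poly_Mapping.single d (Suc 0)) d'" by (intro bexI[of _ d]) auto
    qed
    show "is_ideal (keyideal ?P)"
    proof (rule keyideal_is_ideal)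
      fix a b :: "'v \<Rightarrow>\<^sub>0 nat" assume "b \<in> ?P"
      then obtain d where "d \<in> D" "0 < Poly_Mapping.lookup b d" by blast
      then show "a + b \<in> ?P" by (intro CollectI bexI[of _ d]) (auto simp: lookup_add)
    qed
  qed
  then show ?thesis using assms by (auto simp: keyideal_def)
qed

lemma var_ideal_mono: "D' \<subseteq> D \<Longrightarrow> var_ideal D' \<subseteq> var_ideal D"
  unfolding var_ideal_def
  by (rule gen_ideal_least) (use gen_ideal_sub gen_ideal_is_ideal in blast)+

lemma exists_min_STD_aux:
  "finite D \<Longrightarrow> is_STD E S D \<Longrightarrow> \<exists>D'. D' \<subseteq> D \<and> is_min_STD E S D'"
proof (induction D rule: finite_psubset_induct)
  case (psubset A)
  show ?case
  proof (cases "is_min_STD E S A")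
    case True then show ?thesis by blast
  next
    case False
    then obtain D' where D': "D' \<subset> A" "is_STD E S D'"
      using psubset.prems unfolding is_min_STD_def by blast
    from psubset.IH[OF D'] obtain D'' where "D'' \<subseteq> D'" "is_min_STD E S D''" by blast
    then show ?thesis using D'(1) by (intro exI[of _ D'']) auto
  qed
qed

lemma exists_min_STD:
  fixes D :: "'v::finite set"
  shows "is_STD E S D \<Longrightarrow> \<exists>D'. D' \<subseteq> D \<and> is_min_STD E S D'"
  by (rule exists_min_STD_aux) simp_all

theorem theorem2p6:
  fixes E :: "'v::finite \<Rightarrow> 'v \<Rightarrow> bool" and S :: "'v set"
  assumes sym: "\<And>u v. E u v \<Longrightarrow> E v u"
    and irrefl: "\<And>v. \<not> E v v"
  shows "(open_nbhd_ideal E S :: ('v, 'a::comm_ring_1) mpol set)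
           = \<Inter> {var_ideal D | D. is_STD E S D}
       \<and> (open_nbhd_ideal E S :: ('v, 'a) mpol set)
           = \<Inter> {var_ideal D | D. is_min_STD E S D}
       \<and> (\<forall>D0. is_min_STD E S D0 \<longrightarrow>
            \<Inter> {var_ideal D | D. is_min_STD E S D \<and> D \<noteq> D0}
              \<noteq> (open_nbhd_ideal E S :: ('v, 'a) mpol set))"
proof -
  let ?N = "open_nbhd_ideal E S :: ('v, 'a) mpol set"
  have sub1: "?N \<subseteq> var_ideal D" if DS: "is_STD E S D" for D
    unfolding open_nbhd_ideal_def
  proof (rule gen_ideal_least)
    show "is_ideal (var_ideal D :: ('v, 'a) mpol set)" unfolding var_ideal_def by (rule gen_ideal_is_ideal)
    show "(\<lambda>v. monom_X (nbhd E v)) ` S \<subseteq> (var_ideal D :: ('v, 'a) mpol set)"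
    proof clarify
      fix v assume "v \<in> S"
      then obtain d where "d \<in> D" "v \<in> nbhd E d" using DS unfolding is_STD_def nbhd_set_def by blast
      then have "d \<in> nbhd E v" using sym unfolding nbhd_def by blast
      then show "(monom_X (nbhd E v) :: ('v, 'a) mpol) \<in> var_ideal D"
        using \<open>d \<in> D\<close> by (intro monom_X_in_var_ideal) auto
    qed
  qed
  have idN: "is_ideal ?N" unfolding open_nbhd_ideal_def by (rule gen_ideal_is_ideal)
  have sub2: "\<Inter> {var_ideal D | D. is_STD E S D} \<subseteq> ?N"
  proof
    fix f :: "('v, 'a) mpol" assume f: "f \<in> \<Inter> {var_ideal D | D. is_STD E S D}"
    have "(\<Sum>k\<in>Poly_Mapping.keys f. Poly_Mapping.single k (Poly_Mapping.lookup f k)) \<in> ?N"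
    proof (rule ideal_sum[OF idN])
      fix m assume m: "m \<in> Poly_Mapping.keys f"
      have "\<exists>v\<in>S. nbhd E v \<subseteq> Poly_Mapping.keys m"
      proof (rule ccontr)
        assume "\<not> ?thesis"
        then have "\<forall>v\<in>S. \<exists>u. u \<in> nbhd E v \<and> u \<notin> Poly_Mapping.keys m" by blast
        then obtain g where g: "\<And>v. v \<in> S \<Longrightarrow> g v \<in> nbhd E v \<and> g v \<notin> Poly_Mapping.keys m" by metis
        have "is_STD E S (g ` S)"
          unfolding is_STD_def nbhd_set_def
        proof
          fix v assume "v \<in> S"
          then have "v \<in> nbhd E (g v)" using g[of v] sym unfolding nbhd_def by blast
          then show "v \<in> (\<Union>x\<in>g ` S. nbhd E x)" using \<open>v \<in> S\<close> by blast
        qed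
        then have "f \<in> var_ideal (g ` S)" using f by blast
        from var_ideal_keys[OF this m] obtain d where "d \<in> g ` S" "0 < Poly_Mapping.lookup m d" by blast
        then show False using g by (auto simp: in_keys_iff)
      qed
      then obtain v where v: "v \<in> S" "nbhd E v \<subseteq> Poly_Mapping.keys m" by blast
      define e where "e = ev (nbhd E v)"
      have "m - e + e = m"
      proof (rule poly_mapping_eqI)
        fix k
        show "Poly_Mapping.lookup (m - e + e) k = Poly_Mapping.lookup m k"
          using v(2) by (auto simp: lookup_add lookup_minus e_def lookup_ev in_keys_iff)
      qed
      then have "Poly_Mapping.single m (Poly_Mapping.lookup f m) =
          Poly_Mapping.single (m - e) (Poly_Mapping.lookup f m) * (monom_X (nbhd E v) :: ('v,'a) mpol)"
        by (simp add: monom_X_single e_def mult_single)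
      moreover have "(monom_X (nbhd E v) :: ('v,'a) mpol) \<in> ?N"
        unfolding open_nbhd_ideal_def by (rule gen_ideal_sub[THEN subsetD]) (use v(1) in blast)
      ultimately show "Poly_Mapping.single m (Poly_Mapping.lookup f m) \<in> ?N"
        using ideal_mult[OF idN] by simp
    qed
    then show "f \<in> ?N" by (simp only: sum_monos[of f, symmetric])
  qed
  have eq1: "?N = \<Inter> {var_ideal D | D. is_STD E S D}"
    using sub1 sub2 by blast
  have eq2: "\<Inter> {var_ideal D | D. is_STD E S D} = (\<Inter> {var_ideal D | D. is_min_STD E S D} :: ('v,'a) mpol set)"
  proof
    show "\<Inter> {var_ideal D | D. is_STD E S D} \<subseteq> (\<Inter> {var_ideal D | D. is_min_STD E S D} :: ('v,'a) mpol set)"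
      unfolding is_min_STD_def by blast
    show "(\<Inter> {var_ideal D | D. is_min_STD E S D} :: ('v,'a) mpol set) \<subseteq> \<Inter> {var_ideal D | D. is_STD E S D}"
    proof clarify
      fix f :: "('v,'a) mpol" and D
      assume f: "f \<in> \<Inter> {var_ideal D | D. is_min_STD E S D}" and D: "is_STD E S D"
      obtain D' where "D' \<subseteq> D" "is_min_STD E S D'" using exists_min_STD[OF D] by blast
      then show "f \<in> var_ideal D" using f var_ideal_mono by blast
    qed
  qed
  have irr: "\<Inter> {var_ideal D | D. is_min_STD E S D \<and> D \<noteq> D0} \<noteq> ?N"
    if D0: "is_min_STD E S D0" for D0
  proof
    assume eq: "\<Inter> {var_ideal D | D. is_min_STD E S D \<and> D \<noteq> D0} = ?N"
    define U where "U = UNIV - D0"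
    have "(monom_X U :: ('v,'a) mpol) \<in> \<Inter> {var_ideal D | D. is_min_STD E S D \<and> D \<noteq> D0}"
    proof clarify
      fix D assume D: "is_min_STD E S D" "D \<noteq> D0"
      have "\<not> D \<subseteq> D0"
      proof
        assume "D \<subseteq> D0"
        then have "D \<subset> D0" using D by blast
        then show False using D0 D unfolding is_min_STD_def by blast
      qed
      then obtain d where "d \<in> D" "d \<notin> D0" by blast
      then show "(monom_X U :: ('v,'a) mpol) \<in> var_ideal D"
        by (intro monom_X_in_var_ideal) (auto simp: U_def)
    qed
    then have "(monom_X U :: ('v,'a) mpol) \<in> ?N" by (simp only: eq)
    moreover have "is_STD E S D0" using D0 by (simp add: is_min_STD_def)
    ultimately have "(monom_X U :: ('v,'a) mpol) \<in> var_ideal D0"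
      using sub1 by blast
    moreover have "ev U \<in> Poly_Mapping.keys (monom_X U :: ('v,'a) mpol)" by (simp add: monom_X_single)
    ultimately obtain d where "d \<in> D0" "0 < Poly_Mapping.lookup (ev U) d" using var_ideal_keys by blast
    then show False by (simp add: lookup_ev U_def)
  qed
  show ?thesis using eq1 eq2 irr by simp
qed

end
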